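(* Assume (A1)–(A4). Let $\mathbf v\in C^1([0,T]\times\overline\Omega)^d$ satisfy $\mathrm{div}_x\mathbf v=0$ in $Q$ and $\mathbf v\cdot\mathbf n=0$ on $(0,T)\times\partial\Omega$. Let $\psi:[0,T]\times\overline\Omega\times[r_0,\infty)\to\mathbb{R}$ and $\phi:[0,T]\times\overline\Omega\to\mathbb{R}$ be regular in the sense below, satisfy the Neumann conditions $\nabla_x\psi\cdot\mathbf n=0$, $\nabla_x\phi\cdot\mathbf n=0$ on $\partial\Omega$, initial conditions $\psi(0)=\psi_0\ge0$, $\phi(0)=\phi_0\ge0$, and (almost everywhere) the modified system $$\partial_t\psi+\mathbf v\cdot\nabla_x\psi-A(r)\Delta_x\psi=-\beta(r,\mathbf v,\mathbf D_x\mathbf v)\psi-\tau(r)\phi\,\partial_r\psi_++2\int_r^\infty\beta(\tilde r,\mathbf v,\mathbf D_x\mathbf v)\kappa(r,\tilde r)\psi_+(t,x,\tilde r)\,d\tilde r,$$ $$\partial_t\phi+\mathbf v\cdot\nabla_x\phi-A_0\Delta_x\phi=-\phi\int_{r_0}^\infty\partial_r(r\tau(r))\psi_+\,dr+2\int_0^{r_0}r\int_{r_0}^\infty\beta(\tilde r,\mathbf v,\mathbf D_x\mathbf v)\kappa(r,\tilde r)\psi_+(t,x,\tilde r)\,d\tilde r\,dr.$$ Then $\psi\ge0$ and $\phi\ge0$ almost everywhere.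
   Context: Fix $d\in\{2,3\}$, $T>0$, a bounded domain $\Omega\subset\mathbb{R}^d$ with $\mathcal C^{1,1}$ boundary and unit outward normal $\mathbf n$, $Q:=(0,T)\times\Omega$, $r_0>0$, constants $K>0$, $A_0>0$. $s_+:=\max(s,0)$. $\mathbf D_x\mathbf v:=\frac12(\nabla_x\mathbf v+(\nabla_x\mathbf v)^T)$ and $\beta(r,\mathbf v,\mathbf D_x\mathbf v)$ means $\beta(r,\mathbf v(t,x),\mathbf D_x\mathbf v(t,x))$. Regularity: $\psi,\partial_t\psi,\partial_r\psi,\nabla_x\psi,\nabla_x^2\psi$ and $\phi,\partial_t\phi,\nabla_x\phi,\nabla_x^2\phi$ are continuous on their closed domains, and for every $m\ge0$ the function $(1+r)^m(|\psi|+|\partial_t\psi|+|\partial_r\psi|+|\nabla_x\psi|+|\nabla_x^2\psi|)$ is bounded on $[0,T]\times\overline\Omega\times[r_0,\infty)$. (A1) $A:(r_0,\infty)\to(0,\infty)$ continuous, nonincreasing, $\lim_{r\to\infty}A(r)=0$. (A2) $\tau:[r_0,\infty)\to[0,\infty)$ nondecreasing, bounded, globally Lipschitz, $\tau(r_0)=0$, $\tau'(r_0)>0$, $K^{-1}r_0\le\tau(r)+r\tau'(r)$ and $\tau(r)+\tau'(r)+r\tau'(r)+\tau(r)/r\le K$. (A3) $\beta:(r_0,\infty)\times\mathbb{R}^d\times\mathbb{R}^{d\times d}\to\mathbb{R}$ smooth, increasing in $r$, $0<\beta\le K$; $\eta(r):=\sup_{\mathbf u,\mathbf D}\partial_r\beta(r,\mathbf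 u,\mathbf D)/\beta(r,\mathbf u,\mathbf D)$ is measurable, nonnegative, $(1+r)\eta(r)\le K$, $\int_{r_0}^\infty\eta\le K$. (A4) $\kappa(r,\tilde r)=1/\tilde r$ if $\tilde r>r_0$ and $0<r<\tilde r$; $\kappa=0$ otherwise. *)

theory Defs
  imports "HOL-Analysis.Analysis"
begin

text \<open>Bounded domain (open, connected, bounded) with C^{1,1} boundary, described by a
  global defining function rho (C^1 with globally Lipschitz gradient g) such that
  Omega = {rho < 0} and g does not vanish on the boundary of Omega;
  nrm is the unit outward normal g / |g| on the boundary.\<close>
definition C11_domain_with_normal :: "(real^'n) set \<Rightarrow> (real^'n \<Rightarrow> real^'n) \<Rightarrow> bool"
  where "C11_domain_with_normal \<Omega> nrm \<longleftrightarrow>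
    open \<Omega> \<and> connected \<Omega> \<and> bounded \<Omega> \<and> \<Omega> \<noteq> {} \<and>
    (\<exists>\<rho> g L. (\<forall>x. (\<rho> has_derivative (\<lambda>h. g x \<bullet> h)) (at x)) \<and>
       (\<forall>x y. norm (g x - g y) \<le> L * norm (x - y)) \<and>
       \<Omega> = {x. \<rho> x < 0} \<and>
       (\<forall>x\<in>frontier \<Omega>. g x \<noteq> 0 \<and> nrm x = (1 / norm (g x)) *\<^sub>R g x))"

fun Ck_on :: "nat \<Rightarrow> ('a::euclidean_space) set \<Rightarrow> ('a \<Rightarrow> real) \<Rightarrow> bool" where
  "Ck_on 0 S f = continuous_on S f"
| "Ck_on (Suc k) S f = (f differentiable_on S \<and>
     (\<forall>v. Ck_on k S (\<lambda>x. frechet_derivative f (at x) v)))"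

definition smooth_on :: "('a::euclidean_space) set \<Rightarrow> ('a \<Rightarrow> real) \<Rightarrow> bool" where
  "smooth_on S f \<longleftrightarrow> (\<forall>k. Ck_on k S f)"

definition kappa :: "real \<Rightarrow> real \<Rightarrow> real \<Rightarrow> real" where
  "kappa r0 r rr = (if rr > r0 \<and> 0 < r \<and> r < rr then 1 / rr else 0)"

definition eta :: "(real \<Rightarrow> real^'n \<Rightarrow> real^'n^'n \<Rightarrow> real) \<Rightarrow> real \<Rightarrow> real" where
  "eta \<beta> r = (SUP uD. deriv (\<lambda>s. \<beta> s (fst uD) (snd uD)) r / \<beta> r (fst uD) (snd uD))"

definition lap :: "real^'n^'n \<Rightarrow> real" where
  "lap H = (\<Sum>i\<in>UNIV. H $ i $ i)"

definition symgrad :: "real^'n^'n \<Rightarrow> real^'n^'n" where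
  "symgrad J = (1/2) *\<^sub>R (J + transpose J)"

definition pos :: "real \<Rightarrow> real" where
  "pos s = max s 0"

end

theory Submission
  imports Defs
begin


lemma deriv_neg_right:
  fixes k :: "real \<Rightarrow> real"
  assumes "(k has_real_derivative q) (at 0 within {0..\<delta>})" "q < 0" "\<delta> > 0"
  shows "\<exists>e>0. \<forall>s. 0 < s \<and> s < e \<longrightarrow> k s < k 0"
proof -
  have "((\<lambda>y. (k y - k 0) / (y - 0)) \<longlongrightarrow> q) (at 0 within {0..\<delta>})"
    using assms(1) has_field_derivative_iff by blast
  then have "eventually (\<lambda>y. (k y - k 0) / (y - 0) < 0) (at 0 within {0..\<delta>})"
    using assms(2) order_tendstoD(2) by blast
  then obtain d where d: "d > 0" "\<forall>y\<in>{0..\<delta>}. y \<noteq> 0 \<and> dist y 0 < d \<longrightarrow> (k y - k 0) / (y - 0) < 0"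
    unfolding eventually_at by blast
  show ?thesis
  proof (intro exI[of _ "min d \<delta>"] conjI allI impI)
    show "0 < min d \<delta>" using d assms by simp
    fix s assume s: "0 < s \<and> s < min d \<delta>"
    then have "(k s - k 0) / (s - 0) < 0" using d(2)[rule_format, of s] by auto
    with s show "k s < k 0" by (simp add: divide_less_0_iff)
  qed
qed

lemma deriv_left_min:
  fixes f :: "real \<Rightarrow> real"
  assumes "(f has_real_derivative D) (at t0 within {0..T})" "0 < t0" "t0 \<le> T"
    "\<forall>s\<in>{0..t0}. f t0 \<le> f s"
  shows "D \<le> 0"
proof (rule ccontr)
  assume "\<not> D \<le> 0"
  have "((\<lambda>y. (f y - f t0) / (y - t0)) \<longlongrightarrow> D) (at t0 within {0..T})"
    using assms(1) has_field_derivative_iff by blast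
  then have "eventually (\<lambda>y. 0 < (f y - f t0) / (y - t0)) (at t0 within {0..T})"
    using \<open>\<not> D \<le> 0\<close> order_tendstoD(1) by force
  then obtain d where d: "d > 0" "\<forall>y\<in>{0..T}. y \<noteq> t0 \<and> dist y t0 < d \<longrightarrow> 0 < (f y - f t0) / (y - t0)"
    unfolding eventually_at by blast
  define s where "s = max 0 (t0 - d/2)"
  have s: "0 \<le> s" "s < t0" "s \<le> T" "dist s t0 < d" using d assms by (auto simp: s_def dist_real_def)
  then have "0 < (f s - f t0) / (s - t0)" using d(2) by auto
  with s have "f s < f t0" by (simp add: zero_less_divide_iff)
  with assms(4) s show False by force
qed

lemma open_AE_ge:
  fixes G :: "'a::euclidean_space \<Rightarrow> real"
  assumes "open U" "AE x in lebesgue. x \<in> U \<longrightarrow> 0 \<le> G x" "continuous_on U G"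
  shows "\<forall>x\<in>U. 0 \<le> G x"
proof (rule ccontr)
  assume "\<not> ?thesis"
  then have ne: "U \<inter> G -` {..<0} \<noteq> {}" by force
  have op: "open (U \<inter> G -` {..<0})" using continuous_open_preimage[OF assms(3) assms(1)] by auto
  obtain N where N0: "{x \<in> space lebesgue. \<not> (x \<in> U \<longrightarrow> 0 \<le> G x)} \<subseteq> N" "N \<in> null_sets lebesgue"
    using assms(2) unfolding eventually_ae_filter by blast
  then have N: "{x. \<not> (x \<in> U \<longrightarrow> 0 \<le> G x)} \<subseteq> N" "N \<in> null_sets lebesgue" by auto
  have "U \<inter> G -` {..<0} \<subseteq> N" using N(1) by force
  then have "negligible (U \<inter> G -` {..<0})"
    using N(2) negligible_iff_null_sets negligible_subset by blast
  with open_not_negligible[OF op ne] show False by blast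
qed

lemma deriv_lower:
  fixes f :: "real \<Rightarrow> real"
  assumes "\<forall>D. (f has_real_derivative D) (at x) \<longrightarrow> 0 \<le> D"
  shows "min 0 (SOME D::real. False) \<le> deriv f x"
proof (cases "\<exists>D. (f has_real_derivative D) (at x)")
  case True
  then obtain D where "(f has_real_derivative D) (at x)" by blast
  then show ?thesis using assms DERIV_imp_deriv by fastforce
next
  case False
  then have "(\<lambda>D. (f has_real_derivative D) (at x)) = (\<lambda>D. False)" by auto
  then have "deriv f x = (SOME D::real. False)" unfolding deriv_def by simp
  then show ?thesis by simp
qed



lemma chain_line:
  fixes F :: "real^'n \<Rightarrow> 'b::real_normed_vector"
  assumes "(F has_derivative F') (at (x0 + s *\<^sub>R h) within C)" "\<forall>u\<in>S. x0 + u *\<^sub>R h \<in> C"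
  shows "((\<lambda>u. F (x0 + u *\<^sub>R h)) has_derivative (\<lambda>u. F' (u *\<^sub>R h))) (at s within S)"
proof -
  have l: "((\<lambda>u. x0 + u *\<^sub>R h) has_derivative (\<lambda>u. u *\<^sub>R h)) (at s within S)"
    by (auto intro!: derivative_eq_intros)
  have "(F has_derivative F') (at ((\<lambda>u. x0 + u *\<^sub>R h) s) within (\<lambda>u. x0 + u *\<^sub>R h) ` S)"
    by (rule has_derivative_subset[OF assms(1)]) (use assms(2) in auto)
  from diff_chain_within[OF l this] show ?thesis by (simp add: o_def)
qed

lemma dir_lemma:
  fixes f :: "real^'n \<Rightarrow> real" and fx :: "real^'n \<Rightarrow> real^'n" and fxx :: "real^'n \<Rightarrow> real^'n^'n"
  assumes der: "\<forall>y\<in>closure \<Omega>. (f has_derivative (\<lambda>h. fx y \<bullet> h)) (at y within closure \<Omega>) \<and>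
          (fx has_derivative (\<lambda>h. fxx y *v h)) (at y within closure \<Omega>)"
    and op: "open \<Omega>"
    and x0: "x0 \<in> closure \<Omega>" and min: "\<forall>y\<in>closure \<Omega>. f x0 \<le> f y"
    and D: "\<delta> > 0" "\<forall>s\<in>{0<..\<delta>}. x0 + s *\<^sub>R h \<in> \<Omega>"
  shows "fx x0 \<bullet> h \<ge> 0 \<and> (fx x0 = 0 \<longrightarrow> (fxx x0 *v h) \<bullet> h \<ge> 0)"
proof -
  have inC: "\<forall>u\<in>{0..\<delta>}. x0 + u *\<^sub>R h \<in> closure \<Omega>"
  proof
    fix u assume "u \<in> {0..\<delta>}"
    then show "x0 + u *\<^sub>R h \<in> closure \<Omega>"
      using x0 D closure_subset[of \<Omega>] by (cases "u = 0") force+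
  qed
  have gder: "((\<lambda>u. f (x0 + u *\<^sub>R h)) has_real_derivative (fx (x0 + s *\<^sub>R h) \<bullet> h)) (at s within {0..\<delta>})"
    if "s \<in> {0..\<delta>}" for s
  proof -
    have "((\<lambda>u. f (x0 + u *\<^sub>R h)) has_derivative (\<lambda>u. fx (x0 + s *\<^sub>R h) \<bullet> (u *\<^sub>R h))) (at s within {0..\<delta>})"
      by (rule chain_line) (use der inC that in auto)
    moreover have "(\<lambda>u. fx (x0 + s *\<^sub>R h) \<bullet> (u *\<^sub>R h)) = (*) (fx (x0 + s *\<^sub>R h) \<bullet> h)"
      by (auto simp: mult.commute)
    ultimately show ?thesis unfolding has_field_derivative_def by simp
  qed
  have kder: "((\<lambda>u. fx (x0 + u *\<^sub>R h) \<bullet> h) has_real_derivative ((fxx x0 *v h) \<bullet> h)) (at 0 within {0..\<delta>})"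
  proof -
    have "((\<lambda>u. fx (x0 + u *\<^sub>R h)) has_derivative (\<lambda>u. fxx (x0 + 0 *\<^sub>R h) *v (u *\<^sub>R h))) (at 0 within {0..\<delta>})"
      by (rule chain_line) (use der inC x0 in auto)
    then have "((\<lambda>u. fx (x0 + u *\<^sub>R h) \<bullet> h) has_derivative (\<lambda>u. (fxx x0 *v (u *\<^sub>R h)) \<bullet> h)) (at 0 within {0..\<delta>})"
      by (auto intro!: derivative_eq_intros)
    then have "((\<lambda>u. fx (x0 + u *\<^sub>R h) \<bullet> h) has_derivative (\<lambda>u. u * ((fxx x0 *v h) \<bullet> h))) (at 0 within {0..\<delta>})"
      by (simp add: matrix_vector_mult_scaleR)
    moreover have "(\<lambda>u. u * ((fxx x0 *v h) \<bullet> h)) = (*) ((fxx x0 *v h) \<bullet> h)"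
      by (auto simp: fun_eq_iff mult.commute)
    ultimately show ?thesis unfolding has_field_derivative_def by simp
  qed
  have A: "fx x0 \<bullet> h \<ge> 0"
  proof (rule ccontr)
    assume "\<not> ?thesis"
    then have "fx x0 \<bullet> h < 0" by simp
    have g0: "((\<lambda>u. f (x0 + u *\<^sub>R h)) has_real_derivative (fx x0 \<bullet> h)) (at 0 within {0..\<delta>})"
      using gder[of 0] D by simp
    from deriv_neg_right[OF g0 \<open>fx x0 \<bullet> h < 0\<close> D(1)] obtain e where
      e: "e > 0" "\<forall>s. 0 < s \<and> s < e \<longrightarrow> f (x0 + s *\<^sub>R h) < f (x0 + 0 *\<^sub>R h)" by blast
    define s where "s = min e \<delta> / 2"
    have "0 < s" "s < e" "s \<in> {0<..\<delta>}" using e D by (auto simp: s_def)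
    then have "f (x0 + s *\<^sub>R h) < f x0" using e by auto
    moreover have "x0 + s *\<^sub>R h \<in> closure \<Omega>"
      using D \<open>s \<in> {0<..\<delta>}\<close> closure_subset[of \<Omega>] by blast
    ultimately
    show False using min by force
  qed
  have B: "(fxx x0 *v h) \<bullet> h \<ge> 0" if fz: "fx x0 = 0"
  proof (rule ccontr)
    assume "\<not> ?thesis"
    then have "(fxx x0 *v h) \<bullet> h < 0" by simp
    from deriv_neg_right[OF kder this D(1)] obtain e where
      e: "e > 0" "\<forall>s. 0 < s \<and> s < e \<longrightarrow> fx (x0 + s *\<^sub>R h) \<bullet> h < fx (x0 + 0 *\<^sub>R h) \<bullet> h" by auto
    define s where "s = min e \<delta> / 2"
    have s: "0 < s" "s < e" "s \<le> \<delta>" using e D by (auto simp: s_def)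
    have cont: "continuous_on {0..s} (\<lambda>u. f (x0 + u *\<^sub>R h))"
    proof (rule has_derivative_continuous_on)
      fix u assume u: "u \<in> {0..s}"
      then have "u \<in> {0..\<delta>}" using s by auto
      from has_field_derivative_subset[OF gder[OF this], of "{0..s}"] s
      show "((\<lambda>u. f (x0 + u *\<^sub>R h)) has_derivative (*) (fx (x0 + u *\<^sub>R h) \<bullet> h)) (at u within {0..s})"
        unfolding has_field_derivative_def by auto
    qed
    have dif: "((\<lambda>u. f (x0 + u *\<^sub>R h)) has_real_derivative (fx (x0 + z *\<^sub>R h) \<bullet> h)) (at z)"
      if "0 < z" "z < s" for z
    proof -
      have zi: "z \<in> {0<..<\<delta>}" using that s by auto
      have "((\<lambda>u. f (x0 + u *\<^sub>R h)) has_real_derivative (fx (x0 + z *\<^sub>R h) \<bullet> h)) (at z within {0<..<\<delta>})"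
        by (rule has_field_derivative_subset[OF gder[of z]]) (use zi in auto)
      then show ?thesis using at_within_open[of z "{0<..<\<delta>}"] zi by auto
    qed
    from MVT[OF s(1) cont] dif obtain l z where
      z: "0 < z" "z < s" "DERIV (\<lambda>u. f (x0 + u *\<^sub>R h)) z :> l"
         "f (x0 + s *\<^sub>R h) - f (x0 + 0 *\<^sub>R h) = (s - 0) * l"
      by (metis real_differentiable_def)
    have "l = fx (x0 + z *\<^sub>R h) \<bullet> h" using DERIV_unique[OF z(3) dif[OF z(1,2)]] .
    also have "\<dots> < 0" using e(2)[rule_format, of z] z s fz by auto
    finally have "f (x0 + s *\<^sub>R h) < f x0" using z(4) s mult_pos_neg[of s l] by simp
    moreover have "x0 + s *\<^sub>R h \<in> closure \<Omega>"
      using D s closure_subset[of \<Omega>] greaterThanAtMost_iff by blast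
    ultimately show False using min by force
  qed
  show ?thesis using A B by blast
qed



lemma Q_axis:
  fixes M :: "real^'n^'n"
  shows "(M *v axis i 1) \<bullet> axis i 1 = M $ i $ i"
  by (simp add: matrix_vector_mult_basis inner_axis column_def)

lemma Q_expand:
  fixes M :: "real^'n^'n"
  shows "(M *v (h - e *\<^sub>R g)) \<bullet> (h - e *\<^sub>R g) =
     (M *v h) \<bullet> h - e * ((M *v h) \<bullet> g + (M *v g) \<bullet> h) + e^2 * ((M *v g) \<bullet> g)"
  by (simp add: algebra_simps inner_diff_left inner_diff_right power2_eq_square)

lemma xmin:
  fixes f :: "real^'n \<Rightarrow> real" and fx :: "real^'n \<Rightarrow> real^'n" and fxx :: "real^'n \<Rightarrow> real^'n^'n"
  assumes dom: "C11_domain_with_normal \<Omega> nrm"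
    and der: "\<forall>y\<in>closure \<Omega>. (f has_derivative (\<lambda>h. fx y \<bullet> h)) (at y within closure \<Omega>) \<and>
          (fx has_derivative (\<lambda>h. fxx y *v h)) (at y within closure \<Omega>)"
    and x0: "x0 \<in> closure \<Omega>" and min: "\<forall>y\<in>closure \<Omega>. f x0 \<le> f y"
    and neu: "x0 \<in> frontier \<Omega> \<longrightarrow> fx x0 \<bullet> nrm x0 = 0"
  shows "fx x0 = 0 \<and> 0 \<le> lap (fxx x0)"
proof -
  have op: "open \<Omega>" using dom unfolding C11_domain_with_normal_def by blast
  define Q where "Q h = (fxx x0 *v h) \<bullet> h" for h
  have DL: "fx x0 \<bullet> h \<ge> 0 \<and> (fx x0 = 0 \<longrightarrow> Q h \<ge> 0)"
    if "\<delta> > 0" "\<forall>s\<in>{0<..\<delta>}. x0 + s *\<^sub>R h \<in> \<Omega>" for h \<delta>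
    using dir_lemma[OF der op x0 min that] unfolding Q_def by blast
  have lapQ: "lap (fxx x0) = (\<Sum>i\<in>UNIV. Q (axis i 1))"
    unfolding lap_def Q_def Q_axis ..
  have main: "fx x0 = 0 \<and> (\<forall>h. Q h \<ge> 0)"
  proof (cases "x0 \<in> \<Omega>")
    case True
    obtain e where e: "e > 0" "ball x0 e \<subseteq> \<Omega>" using op True openE by blast
    have D: "\<exists>\<delta>>0. \<forall>s\<in>{0<..\<delta>}. x0 + s *\<^sub>R h \<in> \<Omega>" for h
    proof (intro exI[of _ "e / (2 * (norm h + 1))"] conjI ballI)
      have "0 < 2 * (norm h + 1)" by (smt (verit) norm_ge_zero)
      then show "0 < e / (2 * (norm h + 1))" using e by (simp only: divide_pos_pos)
      fix s assume s: "s \<in> {0<..e / (2 * (norm h + 1))}"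
      have "s * norm h \<le> e / (2 * (norm h + 1)) * norm h"
        using s by (intro mult_right_mono) auto
      also have "\<dots> < e"
      proof -
        have "0 < 2 * (norm h + 1)" by (smt (verit) norm_ge_zero)
        moreover have "norm h < 2 * (norm h + 1)" by (smt (verit) norm_ge_zero)
        then have "e * norm h < e * (2 * (norm h + 1))" using mult_strict_left_mono e(1) by blast
        ultimately show ?thesis by (simp add: divide_less_eq mult.commute)
      qed
      finally have "dist x0 (x0 + s *\<^sub>R h) < e" using s by (simp add: dist_norm)
      then show "x0 + s *\<^sub>R h \<in> \<Omega>" using e by auto
    qed
    have fz: "fx x0 = 0"
    proof -
      from D[of "- fx x0"] obtain \<delta> where "\<delta> > 0" "\<forall>s\<in>{0<..\<delta>}. x0 + s *\<^sub>R (- fx x0) \<in> \<Omega>" by blast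
      from DL[OF this] have "fx x0 \<bullet> (- fx x0) \<ge> 0" by blast
      then have "fx x0 \<bullet> fx x0 \<le> 0" by simp
      then show ?thesis by (metis inner_ge_zero inner_eq_zero_iff order_antisym)
    qed
    moreover have "\<forall>h. Q h \<ge> 0"
    proof
      fix h
      from D[of h] obtain \<delta> where "\<delta> > 0" "\<forall>s\<in>{0<..\<delta>}. x0 + s *\<^sub>R h \<in> \<Omega>" by blast
      from DL[OF this] fz show "Q h \<ge> 0" by blast
    qed
    ultimately show ?thesis by blast
  next
    case False
    have fr: "x0 \<in> frontier \<Omega>" using False x0 op by (simp add: frontier_def interior_open)
    from dom obtain \<rho> g L where
      rho: "\<forall>x. (\<rho> has_derivative (\<lambda>h. g x \<bullet> h)) (at x)"
        "\<Omega> = {x. \<rho> x < 0}" "\<forall>x\<in>frontier \<Omega>. g x \<noteq> 0 \<and> nrm x = (1 / norm (g x)) *\<^sub>R g x"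
      unfolding C11_domain_with_normal_def by blast
    define gx where "gx = g x0"
    have gx: "gx \<noteq> 0" using rho(3) fr unfolding gx_def by auto
    have fg: "fx x0 \<bullet> gx = 0"
    proof -
      have "fx x0 \<bullet> ((1 / norm gx) *\<^sub>R gx) = 0" using neu fr rho(3) gx_def by force
      then show ?thesis using gx by simp
    qed
    have D: "\<exists>\<delta>>0. \<forall>s\<in>{0<..\<delta>}. x0 + s *\<^sub>R h \<in> \<Omega>" if h: "gx \<bullet> h < 0" for h
    proof -
      have "(\<rho> has_derivative (\<lambda>h. g x0 \<bullet> h)) (at (x0 + 0 *\<^sub>R h) within UNIV)" using rho(1) by simp
      from chain_line[OF this, of "{0..1}"]
      have "((\<lambda>u. \<rho> (x0 + u *\<^sub>R h)) has_derivative (\<lambda>u. gx \<bullet> (u *\<^sub>R h))) (at 0 within {0..1})"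
        unfolding gx_def by simp
      moreover have "(\<lambda>u. gx \<bullet> (u *\<^sub>R h)) = (*) (gx \<bullet> h)" by (auto simp: fun_eq_iff mult.commute)
      ultimately have "((\<lambda>u. \<rho> (x0 + u *\<^sub>R h)) has_real_derivative (gx \<bullet> h)) (at 0 within {0..1})"
        unfolding has_field_derivative_def by simp
      from deriv_neg_right[OF this h] obtain e where
        e: "e > 0" "\<forall>s. 0 < s \<and> s < e \<longrightarrow> \<rho> (x0 + s *\<^sub>R h) < \<rho> (x0 + 0 *\<^sub>R h)" by auto
      have cont: "continuous_on UNIV \<rho>"
        using rho(1) has_derivative_continuous continuous_at_imp_continuous_on by blast
      have "closure \<Omega> \<subseteq> {x. \<rho> x \<le> 0}"
        by (rule closure_minimal) (use rho(2) closed_Collect_le[OF cont continuous_on_const] in auto)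
      then have r0: "\<rho> x0 = 0" using x0 False rho(2) by force
      show ?thesis
      proof (intro exI[of _ "e/2"] conjI ballI)
        show "0 < e/2" using e by simp
        fix s assume "s \<in> {0<..e/2}"
        then have "\<rho> (x0 + s *\<^sub>R h) < 0" using e r0 by auto
        then show "x0 + s *\<^sub>R h \<in> \<Omega>" using rho(2) by simp
      qed
    qed
    have fz: "fx x0 = 0"
    proof -
      have "gx \<bullet> (- fx x0 - gx) < 0" using fg gx by (simp add: inner_diff_right inner_commute)
      from D[OF this] obtain \<delta> where "\<delta> > 0" "\<forall>s\<in>{0<..\<delta>}. x0 + s *\<^sub>R (- fx x0 - gx) \<in> \<Omega>" by blast
      from DL[OF this] have "fx x0 \<bullet> (- fx x0 - gx) \<ge> 0" by blast
      then have "fx x0 \<bullet> fx x0 \<le> 0" using fg by (simp add: inner_diff_right)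
      then show ?thesis by (metis inner_ge_zero inner_eq_zero_iff order_antisym)
    qed
    have Qneg: "Q h \<ge> 0" if "gx \<bullet> h < 0" for h
    proof -
      from D[OF that] obtain \<delta> where "\<delta> > 0" "\<forall>s\<in>{0<..\<delta>}. x0 + s *\<^sub>R h \<in> \<Omega>" by blast
      from DL[OF this] fz show ?thesis by blast
    qed
    have Qle: "Q h \<ge> 0" if "gx \<bullet> h \<le> 0" for h
    proof -
      define a where "a = (fxx x0 *v h) \<bullet> gx + (fxx x0 *v gx) \<bullet> h"
      define b where "b = (fxx x0 *v gx) \<bullet> gx"
      have "((\<lambda>e. Q h - e * a + e^2 * b) \<longlongrightarrow> Q h - 0 * a + 0^2 * b) (at_right 0)"
        by (intro tendsto_intros)
      then have lim: "((\<lambda>e. Q h - e * a + e^2 * b) \<longlongrightarrow> Q h) (at_right 0)" by simp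
      have ev: "eventually (\<lambda>e. 0 \<le> Q h - e * a + e^2 * b) (at_right (0::real))"
      proof (rule eventually_at_right_less[THEN eventually_mono])
        fix e :: real assume "0 < e"
        moreover have "0 < gx \<bullet> gx" using gx by simp
        ultimately have "0 < e * (gx \<bullet> gx)" by simp
        then have "gx \<bullet> (h - e *\<^sub>R gx) < 0" using that by (simp add: inner_diff_right)
        from Qneg[OF this] show "0 \<le> Q h - e * a + e^2 * b"
          unfolding Q_def a_def b_def Q_expand by simp
      qed
      show ?thesis by (rule tendsto_lowerbound[OF lim ev]) simp
    qed
    have "\<forall>h. Q h \<ge> 0"
    proof
      fix h
      show "Q h \<ge> 0"
      proof (cases "gx \<bullet> h \<le> 0")
        case True then show ?thesis using Qle by blast
      next
        case False
        then have "gx \<bullet> (- h) \<le> 0" by simp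
        from Qle[OF this] have "Q ((-1::real) *\<^sub>R h) \<ge> 0" by simp
        then show ?thesis unfolding Q_def matrix_vector_mult_scaleR inner_scaleR_left inner_scaleR_right by simp
      qed
    qed
    with fz show ?thesis by blast
  qed
  then show ?thesis using lapQ by (simp add: sum_nonneg)
qed



lemma set_int_nonneg:
  fixes f :: "'a \<Rightarrow> real"
  assumes "\<And>x. x \<in> A \<Longrightarrow> 0 \<le> f x"
  shows "0 \<le> (\<integral>x\<in>A. f x \<partial>M)"
  unfolding set_lebesgue_integral_def
  by (rule integral_nonneg_AE) (auto intro!: AE_I2 simp: indicator_def assms)

lemma powr_int:
  fixes r0 :: real
  assumes "r0 > 0"
  shows "set_integrable lborel {r0<..} (\<lambda>r. r powr -2)"
proof -
  have "((\<lambda>x. x powr (-2)) has_integral -(r0 powr (-2+1)) / (-2+1)) {r0..}"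
    by (rule has_integral_powr_to_inf) (use assms in auto)
  then have "(\<lambda>x. x powr (-2)) integrable_on {r0..}" by blast
  then have "(\<lambda>x. x powr (-2)) absolutely_integrable_on {r0..}"
    by (subst absolutely_integrable_on_iff_nonneg) auto
  then have "set_integrable lebesgue {r0..} (\<lambda>x::real. x powr (-2))" by simp
  then have "set_integrable lebesgue {r0<..} (\<lambda>x::real. x powr (-2))"
    by (rule set_integrable_subset) auto
  then show ?thesis unfolding set_integrable_def
    by (subst (asm) integrable_completion) auto
qed

lemma cont_lap:
  fixes M :: "'a::topological_space \<Rightarrow> real^'n^'n"
  assumes "continuous_on S M"
  shows "continuous_on S (\<lambda>q. lap (M q))"
  unfolding lap_def by (intro continuous_intros assms)

lemma cont_symgrad:
  fixes M :: "'a::topological_space \<Rightarrow> real^'n^'n"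
  assumes "continuous_on S M"
  shows "continuous_on S (\<lambda>q. symgrad (M q))"
proof -
  have "continuous_on S (\<lambda>q. transpose (M q))"
    unfolding transpose_def by (intro continuous_intros assms)
  then show ?thesis unfolding symgrad_def by (intro continuous_intros assms)
qed

lemma deriv_rtau_nonneg:
  fixes \<tau> :: "real \<Rightarrow> real"
  assumes A2: "\<forall>r\<ge>r0. \<forall>D. (\<tau> has_real_derivative D) (at r within {r0..}) \<longrightarrow>
          r0 / K \<le> \<tau> r + r * D \<and> \<tau> r + D + r * D + \<tau> r / r \<le> K"
    and r0: "r0 > 0" and K: "K > 0" and r: "r > r0"
  shows "\<forall>D. ((\<lambda>s. s * \<tau> s) has_real_derivative D) (at r) \<longrightarrow> 0 \<le> D"
proof (intro allI impI)
  fix D assume d: "((\<lambda>s. s * \<tau> s) has_real_derivative D) (at r)"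
  have rp: "r > 0" using r r0 by simp
  have "((\<lambda>s. s * \<tau> s / s) has_real_derivative (D * r - r * \<tau> r * 1) / (r * r)) (at r)"
    by (rule DERIV_divide[OF d DERIV_ident]) (use rp in simp)
  then have "(\<tau> has_real_derivative (D * r - r * \<tau> r * 1) / (r * r)) (at r)"
    by (rule has_field_derivative_transform_within_open[of _ _ _ "{0<..}"]) (use rp in auto)
  moreover have "(D * r - r * \<tau> r * 1) / (r * r) = (D - \<tau> r) / r"
    using rp by (simp add: field_simps)
  ultimately have "(\<tau> has_real_derivative (D - \<tau> r) / r) (at r)" by simp
  then have "(\<tau> has_real_derivative (D - \<tau> r) / r) (at r within {r0..})"
    by (rule has_field_derivative_at_within)
  then have "r0 / K \<le> \<tau> r + r * ((D - \<tau> r) / r)" using A2 r by (meson less_imp_le)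
  also have "\<dots> = D" using rp by simp
  finally show "0 \<le> D" using r0 K by (smt (verit) divide_pos_pos)
qed



theorem lemma3p1:
  fixes \<Omega> :: "(real^'n) set" and nrm :: "real^'n \<Rightarrow> real^'n"
    and T r0 K A0 :: real
    and A :: "real \<Rightarrow> real" and \<tau> :: "real \<Rightarrow> real"
    and \<beta> :: "real \<Rightarrow> real^'n \<Rightarrow> real^'n^'n \<Rightarrow> real"
    and v vt :: "real \<Rightarrow> real^'n \<Rightarrow> real^'n" and vx :: "real \<Rightarrow> real^'n \<Rightarrow> real^'n^'n"
    and \<psi> \<psi>t \<psi>r :: "real \<Rightarrow> real^'n \<Rightarrow> real \<Rightarrow> real"
    and \<psi>x :: "real \<Rightarrow> real^'n \<Rightarrow> real \<Rightarrow> real^'n"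
    and \<psi>xx :: "real \<Rightarrow> real^'n \<Rightarrow> real \<Rightarrow> real^'n^'n"
    and \<psi>0 :: "real^'n \<Rightarrow> real \<Rightarrow> real"
    and \<phi> \<phi>t :: "real \<Rightarrow> real^'n \<Rightarrow> real"
    and \<phi>x :: "real \<Rightarrow> real^'n \<Rightarrow> real^'n"
    and \<phi>xx :: "real \<Rightarrow> real^'n \<Rightarrow> real^'n^'n"
    and \<phi>0 :: "real^'n \<Rightarrow> real"
  assumes dim: "CARD('n) = 2 \<or> CARD('n) = 3"
    and dom: "C11_domain_with_normal \<Omega> nrm"
    and T: "T > 0" and r0: "r0 > 0" and K: "K > 0" and A0: "A0 > 0"
    \<comment> \<open>(A1)\<close>
    and A1: "continuous_on {r0<..} A" "\<forall>r>r0. A r > 0"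
      "\<forall>r s. r0 < r \<and> r \<le> s \<longrightarrow> A s \<le> A r" "(A \<longlongrightarrow> 0) at_top"
    \<comment> \<open>(A2)\<close>
    and A2: "\<forall>r\<ge>r0. \<tau> r \<ge> 0" "mono_on {r0..} \<tau>" "bounded (\<tau> ` {r0..})"
      "\<exists>L. \<forall>r\<ge>r0. \<forall>s\<ge>r0. \<bar>\<tau> r - \<tau> s\<bar> \<le> L * \<bar>r - s\<bar>"
      "\<tau> r0 = 0"
      "\<exists>D. (\<tau> has_real_derivative D) (at r0 within {r0..}) \<and> D > 0"
      "\<forall>r\<ge>r0. \<forall>D. (\<tau> has_real_derivative D) (at r within {r0..}) \<longrightarrow>
          r0 / K \<le> \<tau> r + r * D \<and> \<tau> r + D + r * D + \<tau> r / r \<le> K"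
    \<comment> \<open>(A3)\<close>
    and A3: "smooth_on ({r0<..} \<times> UNIV) (\<lambda>(r, u, D). \<beta> r u D)"
      "\<forall>r s u D. r0 < r \<and> r \<le> s \<longrightarrow> \<beta> r u D \<le> \<beta> s u D"
      "\<forall>r>r0. \<forall>u D. 0 < \<beta> r u D \<and> \<beta> r u D \<le> K"
      "\<forall>r>r0. bdd_above (range (\<lambda>uD. deriv (\<lambda>s. \<beta> s (fst uD) (snd uD)) r / \<beta> r (fst uD) (snd uD)))"
      "set_borel_measurable lborel {r0<..} (eta \<beta>)"
      "\<forall>r>r0. 0 \<le> eta \<beta> r \<and> (1 + r) * eta \<beta> r \<le> K"
      "(\<integral>\<^sup>+ r\<in>{r0<..}. ennreal (eta \<beta> r) \<partial>lborel) \<le> ennreal K"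
    \<comment> \<open>velocity field: C^1 on [0,T] x closure Omega, divergence free, tangential\<close>
    and v_C1: "\<forall>t\<in>{0..T}. \<forall>x\<in>closure \<Omega>.
        ((\<lambda>(s, y). v s y) has_derivative (\<lambda>(h, k). h *\<^sub>R vt t x + vx t x *v k))
          (at (t, x) within {0..T} \<times> closure \<Omega>)"
      "continuous_on ({0..T} \<times> closure \<Omega>) (\<lambda>(t, x). v t x)"
      "continuous_on ({0..T} \<times> closure \<Omega>) (\<lambda>(t, x). vt t x)"
      "continuous_on ({0..T} \<times> closure \<Omega>) (\<lambda>(t, x). vx t x)"
    and v_div: "\<forall>t\<in>{0<..<T}. \<forall>x\<in>\<Omega>. (\<Sum>i\<in>UNIV. vx t x $ i $ i) = 0"
    and v_bdry: "\<forall>t\<in>{0<..<T}. \<forall>x\<in>frontier \<Omega>. v t x \<bullet> nrm x = 0"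
    \<comment> \<open>regularity of psi\<close>
    and psi_reg: "\<forall>t\<in>{0..T}. \<forall>x\<in>closure \<Omega>. \<forall>r\<in>{r0..}.
          ((\<lambda>s. \<psi> s x r) has_real_derivative \<psi>t t x r) (at t within {0..T}) \<and>
          ((\<lambda>s. \<psi> t x s) has_real_derivative \<psi>r t x r) (at r within {r0..}) \<and>
          ((\<lambda>y. \<psi> t y r) has_derivative (\<lambda>h. \<psi>x t x r \<bullet> h)) (at x within closure \<Omega>) \<and>
          ((\<lambda>y. \<psi>x t y r) has_derivative (\<lambda>h. \<psi>xx t x r *v h)) (at x within closure \<Omega>)"
      "continuous_on ({0..T} \<times> closure \<Omega> \<times> {r0..}) (\<lambda>(t, x, r). \<psi> t x r)"
      "continuous_on ({0..T} \<times> closure \<Omega> \<times> {r0..}) (\<lambda>(t, x, r). \<psi>t t x r)"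
      "continuous_on ({0..T} \<times> closure \<Omega> \<times> {r0..}) (\<lambda>(t, x, r). \<psi>r t x r)"
      "continuous_on ({0..T} \<times> closure \<Omega> \<times> {r0..}) (\<lambda>(t, x, r). \<psi>x t x r)"
      "continuous_on ({0..T} \<times> closure \<Omega> \<times> {r0..}) (\<lambda>(t, x, r). \<psi>xx t x r)"
      "\<forall>m\<ge>0. bounded ((\<lambda>(t, x, r). (1 + r) powr m *
          (\<bar>\<psi> t x r\<bar> + \<bar>\<psi>t t x r\<bar> + \<bar>\<psi>r t x r\<bar> + norm (\<psi>x t x r) + norm (\<psi>xx t x r)))
          ` ({0..T} \<times> closure \<Omega> \<times> {r0..}))"
    \<comment> \<open>regularity of phi\<close>
    and phi_reg: "\<forall>t\<in>{0..T}. \<forall>x\<in>closure \<Omega>.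
          ((\<lambda>s. \<phi> s x) has_real_derivative \<phi>t t x) (at t within {0..T}) \<and>
          ((\<lambda>y. \<phi> t y) has_derivative (\<lambda>h. \<phi>x t x \<bullet> h)) (at x within closure \<Omega>) \<and>
          ((\<lambda>y. \<phi>x t y) has_derivative (\<lambda>h. \<phi>xx t x *v h)) (at x within closure \<Omega>)"
      "continuous_on ({0..T} \<times> closure \<Omega>) (\<lambda>(t, x). \<phi> t x)"
      "continuous_on ({0..T} \<times> closure \<Omega>) (\<lambda>(t, x). \<phi>t t x)"
      "continuous_on ({0..T} \<times> closure \<Omega>) (\<lambda>(t, x). \<phi>x t x)"
      "continuous_on ({0..T} \<times> closure \<Omega>) (\<lambda>(t, x). \<phi>xx t x)"
    \<comment> \<open>Neumann boundary conditions\<close>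
    and psi_neumann: "\<forall>t\<in>{0<..<T}. \<forall>x\<in>frontier \<Omega>. \<forall>r\<in>{r0<..}. \<psi>x t x r \<bullet> nrm x = 0"
    and phi_neumann: "\<forall>t\<in>{0<..<T}. \<forall>x\<in>frontier \<Omega>. \<phi>x t x \<bullet> nrm x = 0"
    \<comment> \<open>initial conditions\<close>
    and psi_init: "\<forall>x\<in>\<Omega>. \<forall>r\<in>{r0..}. \<psi> 0 x r = \<psi>0 x r" "\<forall>x\<in>\<Omega>. \<forall>r\<in>{r0..}. \<psi>0 x r \<ge> 0"
    and phi_init: "\<forall>x\<in>\<Omega>. \<phi> 0 x = \<phi>0 x" "\<forall>x\<in>\<Omega>. \<phi>0 x \<ge> 0"
    \<comment> \<open>the modified system, almost everywhere\<close>
    and psi_eq: "AE (t, x, r) in lebesgue. (t, x, r) \<in> {0<..<T} \<times> \<Omega> \<times> {r0<..} \<longrightarrow>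
        \<psi>t t x r + v t x \<bullet> \<psi>x t x r - A r * lap (\<psi>xx t x r) =
          - \<beta> r (v t x) (symgrad (vx t x)) * \<psi> t x r
          - \<tau> r * \<phi> t x * (if \<psi> t x r > 0 then \<psi>r t x r else 0)
          + 2 * (\<integral>rr\<in>{r<..}. \<beta> rr (v t x) (symgrad (vx t x)) * kappa r0 r rr * pos (\<psi> t x rr) \<partial>lborel)"
    and phi_eq: "AE (t, x) in lebesgue. (t, x) \<in> {0<..<T} \<times> \<Omega> \<longrightarrow>
        \<phi>t t x + v t x \<bullet> \<phi>x t x - A0 * lap (\<phi>xx t x) =
          - \<phi> t x * (\<integral>r\<in>{r0<..}. deriv (\<lambda>s. s * \<tau> s) r * pos (\<psi> t x r) \<partial>lborel)
          + 2 * (\<integral>r\<in>{0<..<r0}. r * (\<integral>rr\<in>{r0<..}. \<beta> rr (v t x) (symgrad (vx t x))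
                  * kappa r0 r rr * pos (\<psi> t x rr) \<partial>lborel) \<partial>lborel)"
  shows "(AE (t, x, r) in lebesgue. (t, x, r) \<in> {0<..<T} \<times> \<Omega> \<times> {r0<..} \<longrightarrow> \<psi> t x r \<ge> 0) \<and>
         (AE (t, x) in lebesgue. (t, x) \<in> {0<..<T} \<times> \<Omega> \<longrightarrow> \<phi> t x \<ge> 0)"
proof -
  have opO: "open \<Omega>" and bO: "bounded \<Omega>" using dom unfolding C11_domain_with_normal_def by auto
  have cO: "compact (closure \<Omega>)" using bO by simp
  have sub: "\<Omega> \<subseteq> closure \<Omega>" by (rule closure_subset)
  have betacont: "continuous_on ({r0<..} \<times> UNIV) (\<lambda>p. \<beta> (fst p) (fst (snd p)) (snd (snd p)))"
  proof -
    have "Ck_on 0 ({r0<..} \<times> UNIV) (\<lambda>(r, u, D). \<beta> r u D)" using A3(1) unfolding smooth_on_def by blast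
    then show ?thesis by (simp add: split_def)
  qed
  have cPs: "continuous_on ({0..T} \<times> closure \<Omega> \<times> {r0..}) (\<lambda>q. \<psi> (fst q) (fst (snd q)) (snd (snd q)))"
    using psi_reg(2) by (simp add: split_def)
  have cPst: "continuous_on ({0..T} \<times> closure \<Omega> \<times> {r0..}) (\<lambda>q. \<psi>t (fst q) (fst (snd q)) (snd (snd q)))"
    using psi_reg(3) by (simp add: split_def)
  have cPsx: "continuous_on ({0..T} \<times> closure \<Omega> \<times> {r0..}) (\<lambda>q. \<psi>x (fst q) (fst (snd q)) (snd (snd q)))"
    using psi_reg(5) by (simp add: split_def)
  have cPsxx: "continuous_on ({0..T} \<times> closure \<Omega> \<times> {r0..}) (\<lambda>q. \<psi>xx (fst q) (fst (snd q)) (snd (snd q)))"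
    using psi_reg(6) by (simp add: split_def)
  have cv: "continuous_on ({0..T} \<times> closure \<Omega>) (\<lambda>p. v (fst p) (snd p))"
    using v_C1(2) by (simp add: split_def)
  have cvx: "continuous_on ({0..T} \<times> closure \<Omega>) (\<lambda>p. vx (fst p) (snd p))"
    using v_C1(4) by (simp add: split_def)
  have gain_nonneg: "0 \<le> (\<integral>rr\<in>{r<..}. \<beta> rr u D * kappa r0 r rr * pos (f rr) \<partial>lborel)"
    if "r > r0" for r u D and f :: "real \<Rightarrow> real"
  proof (rule set_int_nonneg)
    fix rr assume "rr \<in> {r<..}"
    then have "rr > r0" using that by simp
    then have "0 < \<beta> rr u D" "0 \<le> kappa r0 r rr" "0 \<le> pos (f rr)"
      using A3(3) r0 by (auto simp: kappa_def pos_def)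
    then show "0 \<le> \<beta> rr u D * kappa r0 r rr * pos (f rr)" by simp
  qed
  have psi_pos: "\<psi> t x r \<ge> 0" if t: "t \<in> {0<..<T}" and x: "x \<in> \<Omega>" and r: "r > r0" for t x r
  proof (rule ccontr)
    assume neg: "\<not> ?thesis"
    define S0 where "S0 = {0..t} \<times> closure \<Omega>"
    have cS0: "compact S0" unfolding S0_def using cO by (intro compact_Times) auto
    have neS0: "S0 \<noteq> {}" using x sub t unfolding S0_def by force
    have "continuous_on S0 (\<lambda>q. (\<lambda>q. \<psi> (fst q) (fst (snd q)) (snd (snd q))) (fst q, snd q, r))"
      by (rule continuous_on_compose2[OF cPs]) (use t r in \<open>auto simp: S0_def intro!: continuous_intros\<close>)
    then have contS0: "continuous_on S0 (\<lambda>q. \<psi> (fst q) (snd q) r)" by simp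
    obtain p where p: "p \<in> S0" "\<forall>q\<in>S0. \<psi> (fst p) (snd p) r \<le> \<psi> (fst q) (snd q) r"
      using continuous_attains_inf[OF cS0 neS0 contS0] by blast
    obtain t0 x0 where p_eq: "p = (t0, x0)" by (cases p)
    have t0: "0 \<le> t0" "t0 \<le> t" and x0: "x0 \<in> closure \<Omega>" using p(1) p_eq S0_def by auto
    have minp: "\<forall>s\<in>{0..t}. \<forall>y\<in>closure \<Omega>. \<psi> t0 x0 r \<le> \<psi> s y r" using p(2) p_eq S0_def by auto
    have negp: "\<psi> t0 x0 r < 0"
    proof -
      have "t \<in> {0..t}" "x \<in> closure \<Omega>" using t x sub by auto
      then have "\<psi> t0 x0 r \<le> \<psi> t x r" using minp by blast
      then show ?thesis using neg by simp
    qed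
    have init: "0 \<le> \<psi> 0 y r" if y: "y \<in> closure \<Omega>" for y
    proof -
      have "continuous_on (closure \<Omega>) (\<lambda>y. (\<lambda>q. \<psi> (fst q) (fst (snd q)) (snd (snd q))) (0, y, r))"
        by (rule continuous_on_compose2[OF cPs]) (use T r in \<open>auto intro!: continuous_intros\<close>)
      then have "continuous_on (closure \<Omega>) (\<lambda>y. \<psi> 0 y r)" by simp
      then show ?thesis by (rule continuous_ge_on_closure[OF _ y]) (use psi_init r in auto)
    qed
    have t0pos: "0 < t0" using init[OF x0] negp t0 by (cases "t0 = 0") auto
    have t0T: "t0 < T" using t0 t by auto
    have rr: "r \<in> {r0..}" "r \<in> {r0<..}" using r by auto
    have dt: "\<psi>t t0 x0 r \<le> 0"
    proof (rule deriv_left_min)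
      show "((\<lambda>s. \<psi> s x0 r) has_real_derivative \<psi>t t0 x0 r) (at t0 within {0..T})"
        using psi_reg(1) t0pos t0T x0 rr by auto
      show "\<forall>s\<in>{0..t0}. \<psi> t0 x0 r \<le> \<psi> s x0 r" using minp x0 t0 by auto
    qed (use t0pos t0T in auto)
    have xm: "\<psi>x t0 x0 r = 0 \<and> 0 \<le> lap (\<psi>xx t0 x0 r)"
    proof (rule xmin[OF dom _ x0])
      show "\<forall>y\<in>closure \<Omega>. ((\<lambda>y. \<psi> t0 y r) has_derivative (\<lambda>h. \<psi>x t0 y r \<bullet> h)) (at y within closure \<Omega>) \<and>
          ((\<lambda>y. \<psi>x t0 y r) has_derivative (\<lambda>h. \<psi>xx t0 y r *v h)) (at y within closure \<Omega>)"
        using psi_reg(1) t0pos t0T rr by auto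
      show "\<forall>y\<in>closure \<Omega>. \<psi> t0 x0 r \<le> \<psi> t0 y r" using minp t0 by auto
      show "x0 \<in> frontier \<Omega> \<longrightarrow> \<psi>x t0 x0 r \<bullet> nrm x0 = 0" using psi_neumann t0pos t0T rr by auto
    qed
    define G where "G q = \<psi>t (fst q) (fst (snd q)) (snd (snd q))
       + v (fst q) (fst (snd q)) \<bullet> \<psi>x (fst q) (fst (snd q)) (snd (snd q))
       - A (snd (snd q)) * lap (\<psi>xx (fst q) (fst (snd q)) (snd (snd q)))
       + \<beta> (snd (snd q)) (v (fst q) (fst (snd q))) (symgrad (vx (fst q) (fst (snd q)))) * \<psi> (fst q) (fst (snd q)) (snd (snd q))"
      for q :: "real \<times> (real^'n) \<times> real"
    define r1 where "r1 = (r0 + r) / 2"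
    define r2 where "r2 = r + 1"
    have r12: "r0 < r1" "r1 < r" "r < r2" using r by (auto simp: r1_def r2_def)
    define S where "S = {0..T} \<times> closure \<Omega> \<times> {r1..r2}"
    define Ps where "Ps = (\<lambda>q::real \<times> (real^'n) \<times> real. \<psi> (fst q) (fst (snd q)) (snd (snd q)))"
    define B where "B = {0<..<T} \<times> \<Omega> \<times> {r1<..<r2}"
    define U where "U = B \<inter> Ps -` {..<0}"
    have SP: "S \<subseteq> {0..T} \<times> closure \<Omega> \<times> {r0..}" using r12 by (auto simp: S_def)
    have BS: "B \<subseteq> S" using sub by (auto simp: B_def S_def)
    have US: "U \<subseteq> S" using BS by (auto simp: U_def)
    have cS: "closed S" unfolding S_def by (intro closed_Times) auto
    have cG: "continuous_on S G"
    proof -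
      have c1: "continuous_on S (\<lambda>q. \<psi>t (fst q) (fst (snd q)) (snd (snd q)))"
        by (rule continuous_on_subset[OF cPst SP])
      have c2: "continuous_on S (\<lambda>q. \<psi>x (fst q) (fst (snd q)) (snd (snd q)))"
        by (rule continuous_on_subset[OF cPsx SP])
      have c3: "continuous_on S (\<lambda>q. \<psi>xx (fst q) (fst (snd q)) (snd (snd q)))"
        by (rule continuous_on_subset[OF cPsxx SP])
      have c4: "continuous_on S (\<lambda>q. \<psi> (fst q) (fst (snd q)) (snd (snd q)))"
        by (rule continuous_on_subset[OF cPs SP])
      have "continuous_on S (\<lambda>q. (\<lambda>p. v (fst p) (snd p)) (fst q, fst (snd q)))"
        by (rule continuous_on_compose2[OF cv]) (auto simp: S_def intro!: continuous_intros)
      then have c5: "continuous_on S (\<lambda>q. v (fst q) (fst (snd q)))" by simp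
      have "continuous_on S (\<lambda>q. (\<lambda>p. vx (fst p) (snd p)) (fst q, fst (snd q)))"
        by (rule continuous_on_compose2[OF cvx]) (auto simp: S_def intro!: continuous_intros)
      then have c6: "continuous_on S (\<lambda>q. vx (fst q) (fst (snd q)))" by simp
      have "continuous_on S (\<lambda>q. A (snd (snd q)))"
        by (rule continuous_on_compose2[OF A1(1)]) (use r12 in \<open>auto simp: S_def intro!: continuous_intros\<close>)
      note c7 = this
      have "continuous_on S (\<lambda>q. (\<lambda>p. \<beta> (fst p) (fst (snd p)) (snd (snd p)))
              (snd (snd q), v (fst q) (fst (snd q)), symgrad (vx (fst q) (fst (snd q)))))"
        by (rule continuous_on_compose2[OF betacont]) (use r12 in \<open>auto simp: S_def intro!: continuous_intros c5[unfolded S_def] c6[unfolded S_def] cont_symgrad\<close>)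
      then have c8: "continuous_on S (\<lambda>q. \<beta> (snd (snd q)) (v (fst q) (fst (snd q))) (symgrad (vx (fst q) (fst (snd q)))))"
        by simp
      show ?thesis unfolding G_def
        by (intro continuous_on_add continuous_on_diff continuous_on_mult continuous_on_inner cont_lap c1 c2 c3 c4 c5 c7 c8)
    qed
    have oU: "open U" unfolding U_def
    proof (rule continuous_open_preimage)
      show "continuous_on B Ps" unfolding Ps_def by (rule continuous_on_subset[OF cPs]) (use BS SP in blast)
      show "open B" unfolding B_def using opO by (intro open_Times) auto
    qed auto
    have Gq: "0 \<le> G (t', x', r')" if qU: "(t', x', r') \<in> U" and
      E: "(t', x', r') \<in> {0<..<T} \<times> \<Omega> \<times> {r0<..} \<longrightarrow>
        \<psi>t t' x' r' + v t' x' \<bullet> \<psi>x t' x' r' - A r' * lap (\<psi>xx t' x' r') =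
          - \<beta> r' (v t' x') (symgrad (vx t' x')) * \<psi> t' x' r'
          - \<tau> r' * \<phi> t' x' * (if \<psi> t' x' r' > 0 then \<psi>r t' x' r' else 0)
          + 2 * (\<integral>rr\<in>{r'<..}. \<beta> rr (v t' x') (symgrad (vx t' x')) * kappa r0 r' rr * pos (\<psi> t' x' rr) \<partial>lborel)"
      for t' x' r'
    proof -
      have m: "t' \<in> {0<..<T}" "x' \<in> \<Omega>" "r1 < r'" "r' < r2" "\<psi> t' x' r' < 0"
        using qU by (auto simp: U_def B_def Ps_def)
      then have "r' > r0" using r12 by simp
      with m E have E': "\<psi>t t' x' r' + v t' x' \<bullet> \<psi>x t' x' r' - A r' * lap (\<psi>xx t' x' r') =
          - \<beta> r' (v t' x') (symgrad (vx t' x')) * \<psi> t' x' r'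
          + 2 * (\<integral>rr\<in>{r'<..}. \<beta> rr (v t' x') (symgrad (vx t' x')) * kappa r0 r' rr * pos (\<psi> t' x' rr) \<partial>lborel)"
        by auto
      have "0 \<le> (\<integral>rr\<in>{r'<..}. \<beta> rr (v t' x') (symgrad (vx t' x')) * kappa r0 r' rr * pos (\<psi> t' x' rr) \<partial>lborel)"
        by (rule gain_nonneg) (use \<open>r' > r0\<close> in simp)
      with E' show ?thesis unfolding G_def by simp
    qed
    have aeU: "AE q in lebesgue. q \<in> U \<longrightarrow> 0 \<le> G q"
      apply (rule eventually_mono[OF psi_eq])
      subgoal for q by (cases q) (auto intro: Gq)
      done
    have Uge: "\<forall>q\<in>U. 0 \<le> G q"
      by (rule open_AE_ge[OF oU aeU]) (rule continuous_on_subset[OF cG US])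
    have pcl: "(t0, x0, r) \<in> closure U"
      unfolding closure_approachable
    proof (intro allI impI)
      fix e :: real assume e: "e > 0"
      have "continuous_on (closure \<Omega>) (\<lambda>y. (\<lambda>q. \<psi> (fst q) (fst (snd q)) (snd (snd q))) (t0, y, r))"
        by (rule continuous_on_compose2[OF cPs]) (use t0 t0T rr in \<open>auto intro!: continuous_intros\<close>)
      then have "continuous_on (closure \<Omega>) (\<lambda>y. \<psi> t0 y r)" by simp
      then obtain d where d: "d > 0" "\<forall>y\<in>closure \<Omega>. dist y x0 < d \<longrightarrow> dist (\<psi> t0 y r) (\<psi> t0 x0 r) < - \<psi> t0 x0 r"
        using x0 negp unfolding continuous_on_iff by (meson neg_0_less_iff_less)
      obtain y where y: "y \<in> \<Omega>" "dist y x0 < min d e"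
        using x0 d e unfolding closure_approachable by (metis min_less_iff_conj)
      have "\<psi> t0 y r < 0" using d y sub by (force simp: dist_real_def)
      then have "(t0, y, r) \<in> U" using y t0pos t0T r12 by (auto simp: U_def B_def Ps_def)
      moreover have "dist (t0, y, r) (t0, x0, r) < e" using y by (simp add: dist_Pair_Pair)
      ultimately show "\<exists>q\<in>U. dist q (t0, x0, r) < e" by blast
    qed
    have "0 \<le> G (t0, x0, r)"
    proof (rule continuous_ge_on_closure[OF _ pcl])
      have "closure U \<subseteq> S" using US cS by (simp add: closure_minimal)
      then show "continuous_on (closure U) G" using cG continuous_on_subset by blast
    qed (use Uge in auto)
    moreover have "A r * lap (\<psi>xx t0 x0 r) \<ge> 0" using A1(2) r xm by (metis less_imp_le mult_nonneg_nonneg)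
    moreover have "\<beta> r (v t0 x0) (symgrad (vx t0 x0)) * \<psi> t0 x0 r < 0"
      using A3(3) r negp mult_pos_neg by blast
    ultimately show False using dt xm unfolding G_def by simp
  qed
  have cPh: "continuous_on ({0..T} \<times> closure \<Omega>) (\<lambda>q. \<phi> (fst q) (snd q))"
    using phi_reg(2) by (simp add: split_def)
  have cPht: "continuous_on ({0..T} \<times> closure \<Omega>) (\<lambda>q. \<phi>t (fst q) (snd q))"
    using phi_reg(3) by (simp add: split_def)
  have cPhx: "continuous_on ({0..T} \<times> closure \<Omega>) (\<lambda>q. \<phi>x (fst q) (snd q))"
    using phi_reg(4) by (simp add: split_def)
  have cPhxx: "continuous_on ({0..T} \<times> closure \<Omega>) (\<lambda>q. \<phi>xx (fst q) (snd q))"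
    using phi_reg(5) by (simp add: split_def)
  obtain C where Cnn: "0 \<le> C" and CI: "\<forall>t\<in>{0<..<T}. \<forall>x\<in>\<Omega>.
      - C \<le> (\<integral>r\<in>{r0<..}. deriv (\<lambda>s. s * \<tau> s) r * pos (\<psi> t x r) \<partial>lborel)"
  proof -
    obtain B where B: "\<forall>z\<in>(\<lambda>(t, x, r). (1 + r) powr 2 *
          (\<bar>\<psi> t x r\<bar> + \<bar>\<psi>t t x r\<bar> + \<bar>\<psi>r t x r\<bar> + norm (\<psi>x t x r) + norm (\<psi>xx t x r)))
          ` ({0..T} \<times> closure \<Omega> \<times> {r0..}). norm z \<le> B"
      using psi_reg(7) unfolding bounded_iff by (meson zero_le_numeral)
    have psib: "\<bar>\<psi> t x r\<bar> \<le> B * r powr -2" if "t \<in> {0..T}" "x \<in> closure \<Omega>" "r > r0" for t x r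
    proof -
      have "norm ((1 + r) powr 2 *
          (\<bar>\<psi> t x r\<bar> + \<bar>\<psi>t t x r\<bar> + \<bar>\<psi>r t x r\<bar> + norm (\<psi>x t x r) + norm (\<psi>xx t x r))) \<le> B"
        using B that by force
      then have b1: "(1 + r) powr 2 *
          (\<bar>\<psi> t x r\<bar> + \<bar>\<psi>t t x r\<bar> + \<bar>\<psi>r t x r\<bar> + norm (\<psi>x t x r) + norm (\<psi>xx t x r)) \<le> B"
        by simp
      have rp: "r > 0" using that r0 by simp
      have "r powr 2 \<le> (1 + r) powr 2" using rp by (intro powr_mono2) auto
      then have "r powr 2 * \<bar>\<psi> t x r\<bar> \<le> (1 + r) powr 2 *
          (\<bar>\<psi> t x r\<bar> + \<bar>\<psi>t t x r\<bar> + \<bar>\<psi>r t x r\<bar> + norm (\<psi>x t x r) + norm (\<psi>xx t x r))"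
        by (intro mult_mono) auto
      with b1 have "r powr 2 * \<bar>\<psi> t x r\<bar> \<le> B" by linarith
      moreover have "r powr 2 > 0" using rp by simp
      ultimately show ?thesis by (simp add: powr_minus field_simps)
    qed
    define m0 where "m0 = min 0 (SOME D::real. False)"
    have m0: "m0 \<le> 0" by (simp add: m0_def)
    have dm: "m0 \<le> deriv (\<lambda>s. s * \<tau> s) r" if "r > r0" for r
      unfolding m0_def by (rule deriv_lower, rule deriv_rtau_nonneg[OF A2(7) r0 K that])
    define k where "k r = m0 * B * r powr -2" for r :: real
    have kint: "set_integrable lborel {r0<..} k"
      unfolding k_def using powr_int[OF r0] by (cases "m0 * B = 0") auto
    define C where "C = max 0 (- (\<integral>r\<in>{r0<..}. k r \<partial>lborel))"
    show ?thesis
    proof (rule that[of C])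
      show "0 \<le> C" by (simp add: C_def)
      show "\<forall>t\<in>{0<..<T}. \<forall>x\<in>\<Omega>. - C \<le> (\<integral>r\<in>{r0<..}. deriv (\<lambda>s. s * \<tau> s) r * pos (\<psi> t x r) \<partial>lborel)"
      proof (intro ballI)
        fix t x assume t: "t \<in> {0<..<T}" and x: "x \<in> \<Omega>"
        show "- C \<le> (\<integral>r\<in>{r0<..}. deriv (\<lambda>s. s * \<tau> s) r * pos (\<psi> t x r) \<partial>lborel)"
        proof (cases "set_integrable lborel {r0<..} (\<lambda>r. deriv (\<lambda>s. s * \<tau> s) r * pos (\<psi> t x r))")
          case False
          then have "(\<integral>r\<in>{r0<..}. deriv (\<lambda>s. s * \<tau> s) r * pos (\<psi> t x r) \<partial>lborel) = 0"
            unfolding set_integrable_def set_lebesgue_integral_def by (rule not_integrable_integral_eq)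
          then show ?thesis by (simp add: C_def)
        next
          case True
          have "(\<integral>r\<in>{r0<..}. k r \<partial>lborel) \<le> (\<integral>r\<in>{r0<..}. deriv (\<lambda>s. s * \<tau> s) r * pos (\<psi> t x r) \<partial>lborel)"
          proof (rule set_integral_mono[OF kint True])
            fix r assume "r \<in> {r0<..}"
            then have r: "r > r0" by simp
            have P: "0 \<le> pos (\<psi> t x r)" "pos (\<psi> t x r) \<le> B * r powr -2"
              using psib[of t x r] t x sub r by (auto simp: pos_def)
            have "m0 * (B * r powr -2) \<le> m0 * pos (\<psi> t x r)"
              using P m0 by (intro mult_left_mono_neg) auto
            also have "\<dots> \<le> deriv (\<lambda>s. s * \<tau> s) r * pos (\<psi> t x r)"
              using P dm[OF r] by (intro mult_right_mono) auto
            finally show "k r \<le> deriv (\<lambda>s. s * \<tau> s) r * pos (\<psi> t x r)"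
              by (simp add: k_def mult.assoc)
          qed
          then show ?thesis by (simp add: C_def)
        qed
      qed
    qed
  qed
  have phi_pos: "\<phi> t x \<ge> 0" if t: "t \<in> {0<..<T}" and x: "x \<in> \<Omega>" for t x
  proof (rule ccontr)
    assume neg: "\<not> ?thesis"
    define lam where "lam = C + 1"
    define S0 where "S0 = {0..t} \<times> closure \<Omega>"
    have cS0: "compact S0" unfolding S0_def using cO by (intro compact_Times) auto
    have neS0: "S0 \<noteq> {}" using x sub t unfolding S0_def by force
    have "continuous_on S0 (\<lambda>q. \<phi> (fst q) (snd q))"
      by (rule continuous_on_subset[OF cPh]) (use t in \<open>auto simp: S0_def\<close>)
    then have contS0: "continuous_on S0 (\<lambda>q. exp (- lam * fst q) * \<phi> (fst q) (snd q))"
      by (intro continuous_intros)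
    obtain p where p: "p \<in> S0" "\<forall>q\<in>S0. exp (- lam * fst p) * \<phi> (fst p) (snd p) \<le> exp (- lam * fst q) * \<phi> (fst q) (snd q)"
      using continuous_attains_inf[OF cS0 neS0 contS0] by blast
    obtain t0 x0 where p_eq: "p = (t0, x0)" by (cases p)
    have t0: "0 \<le> t0" "t0 \<le> t" and x0: "x0 \<in> closure \<Omega>" using p(1) p_eq S0_def by auto
    have minp: "\<forall>s\<in>{0..t}. \<forall>y\<in>closure \<Omega>. exp (- lam * t0) * \<phi> t0 x0 \<le> exp (- lam * s) * \<phi> s y"
      using p(2) p_eq S0_def by auto
    have negp: "\<phi> t0 x0 < 0"
    proof -
      have "t \<in> {0..t}" "x \<in> closure \<Omega>" using t x sub by auto
      then have "exp (- lam * t0) * \<phi> t0 x0 \<le> exp (- lam * t) * \<phi> t x" using minp by blast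
      also have "\<dots> < 0" using neg by (simp add: mult_pos_neg)
      finally show ?thesis by (simp add: mult_less_0_iff)
    qed
    have init: "0 \<le> \<phi> 0 y" if y: "y \<in> closure \<Omega>" for y
    proof -
      have "continuous_on (closure \<Omega>) (\<lambda>y. (\<lambda>q. \<phi> (fst q) (snd q)) (0, y))"
        by (rule continuous_on_compose2[OF cPh]) (use T in \<open>auto intro!: continuous_intros\<close>)
      then have "continuous_on (closure \<Omega>) (\<lambda>y. \<phi> 0 y)" by simp
      then show ?thesis by (rule continuous_ge_on_closure[OF _ y]) (use phi_init in auto)
    qed
    have t0pos: "0 < t0" using init[OF x0] negp t0 by (cases "t0 = 0") auto
    have t0T: "t0 < T" using t0 t by auto
    have dt: "\<phi>t t0 x0 \<le> lam * \<phi> t0 x0"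
    proof -
      have d0: "((\<lambda>s. \<phi> s x0) has_real_derivative \<phi>t t0 x0) (at t0 within {0..T})"
        using phi_reg(1) t0pos t0T x0 by auto
      have "((\<lambda>s. exp (- lam * s) * \<phi> s x0) has_real_derivative
             (exp (- lam * t0) * (- lam) * \<phi> t0 x0 + exp (- lam * t0) * \<phi>t t0 x0)) (at t0 within {0..T})"
        by (rule derivative_eq_intros refl d0 | simp)+
      then have "exp (- lam * t0) * (- lam) * \<phi> t0 x0 + exp (- lam * t0) * \<phi>t t0 x0 \<le> 0"
      proof (rule deriv_left_min)
        show "\<forall>s\<in>{0..t0}. exp (- lam * t0) * \<phi> t0 x0 \<le> exp (- lam * s) * \<phi> s x0"
          using minp x0 t0 by auto
      qed (use t0pos t0T in auto)
      then have "exp (- lam * t0) * (\<phi>t t0 x0 - lam * \<phi> t0 x0) \<le> 0" by (simp add: algebra_simps)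
      then show ?thesis by (simp add: mult_le_0_iff)
    qed
    have xm: "\<phi>x t0 x0 = 0 \<and> 0 \<le> lap (\<phi>xx t0 x0)"
    proof (rule xmin[OF dom _ x0])
      show "\<forall>y\<in>closure \<Omega>. ((\<lambda>y. \<phi> t0 y) has_derivative (\<lambda>h. \<phi>x t0 y \<bullet> h)) (at y within closure \<Omega>) \<and>
          ((\<lambda>y. \<phi>x t0 y) has_derivative (\<lambda>h. \<phi>xx t0 y *v h)) (at y within closure \<Omega>)"
        using phi_reg(1) t0pos t0T by auto
      show "\<forall>y\<in>closure \<Omega>. \<phi> t0 x0 \<le> \<phi> t0 y"
      proof
        fix y assume "y \<in> closure \<Omega>"
        then have "exp (- lam * t0) * \<phi> t0 x0 \<le> exp (- lam * t0) * \<phi> t0 y" using minp t0 by auto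
        then show "\<phi> t0 x0 \<le> \<phi> t0 y" by simp
      qed
      show "x0 \<in> frontier \<Omega> \<longrightarrow> \<phi>x t0 x0 \<bullet> nrm x0 = 0" using phi_neumann t0pos t0T by auto
    qed
    define G where "G q = \<phi>t (fst q) (snd q) + v (fst q) (snd q) \<bullet> \<phi>x (fst q) (snd q)
       - A0 * lap (\<phi>xx (fst q) (snd q)) - C * \<phi> (fst q) (snd q)"
      for q :: "real \<times> (real^'n)"
    define S where "S = {0..T} \<times> closure \<Omega>"
    define Ph where "Ph = (\<lambda>q::real \<times> (real^'n). \<phi> (fst q) (snd q))"
    define B where "B = {0<..<T} \<times> \<Omega>"
    define U where "U = B \<inter> Ph -` {..<0}"
    have BS: "B \<subseteq> S" using sub by (auto simp: B_def S_def)
    have US: "U \<subseteq> S" using BS by (auto simp: U_def)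
    have cS: "closed S" unfolding S_def by (intro closed_Times) auto
    have cG: "continuous_on S G"
      unfolding G_def S_def
      by (intro continuous_on_add continuous_on_diff continuous_on_mult continuous_on_inner cont_lap
          cPh cPht cPhx cPhxx cv continuous_on_const)
    have oU: "open U" unfolding U_def
    proof (rule continuous_open_preimage)
      show "continuous_on B Ph" unfolding Ph_def by (rule continuous_on_subset[OF cPh]) (use BS in \<open>simp add: S_def\<close>)
      show "open B" unfolding B_def using opO by (intro open_Times) auto
    qed auto
    have Gq: "0 \<le> G (t', x')" if qU: "(t', x') \<in> U" and
      E: "(t', x') \<in> {0<..<T} \<times> \<Omega> \<longrightarrow>
        \<phi>t t' x' + v t' x' \<bullet> \<phi>x t' x' - A0 * lap (\<phi>xx t' x') =
          - \<phi> t' x' * (\<integral>r\<in>{r0<..}. deriv (\<lambda>s. s * \<tau> s) r * pos (\<psi> t' x' r) \<partial>lborel)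
          + 2 * (\<integral>r\<in>{0<..<r0}. r * (\<integral>rr\<in>{r0<..}. \<beta> rr (v t' x') (symgrad (vx t' x'))
                  * kappa r0 r rr * pos (\<psi> t' x' rr) \<partial>lborel) \<partial>lborel)"
      for t' x'
    proof -
      have m: "t' \<in> {0<..<T}" "x' \<in> \<Omega>" "\<phi> t' x' < 0"
        using qU by (auto simp: U_def B_def Ph_def)
      define I where "I = (\<integral>r\<in>{r0<..}. deriv (\<lambda>s. s * \<tau> s) r * pos (\<psi> t' x' r) \<partial>lborel)"
      define S2 where "S2 = (\<integral>r\<in>{0<..<r0}. r * (\<integral>rr\<in>{r0<..}. \<beta> rr (v t' x') (symgrad (vx t' x'))
                  * kappa r0 r rr * pos (\<psi> t' x' rr) \<partial>lborel) \<partial>lborel)"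
      have E': "\<phi>t t' x' + v t' x' \<bullet> \<phi>x t' x' - A0 * lap (\<phi>xx t' x') = - \<phi> t' x' * I + 2 * S2"
        using E m unfolding I_def S2_def by auto
      have S2: "0 \<le> S2" unfolding S2_def
      proof (rule set_int_nonneg)
        fix r assume "r \<in> {0<..<r0}"
        then have "0 < r" by simp
        moreover have "0 \<le> (\<integral>rr\<in>{r0<..}. \<beta> rr (v t' x') (symgrad (vx t' x'))
                  * kappa r0 r rr * pos (\<psi> t' x' rr) \<partial>lborel)"
        proof (rule set_int_nonneg)
          fix rr assume "rr \<in> {r0<..}"
          then have "rr > r0" by simp
          then have "0 < \<beta> rr (v t' x') (symgrad (vx t' x'))" "0 \<le> kappa r0 r rr" "0 \<le> pos (\<psi> t' x' rr)"
            using A3(3) r0 by (auto simp: kappa_def pos_def)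
          then show "0 \<le> \<beta> rr (v t' x') (symgrad (vx t' x')) * kappa r0 r rr * pos (\<psi> t' x' rr)" by simp
        qed
        ultimately show "0 \<le> r * (\<integral>rr\<in>{r0<..}. \<beta> rr (v t' x') (symgrad (vx t' x'))
                  * kappa r0 r rr * pos (\<psi> t' x' rr) \<partial>lborel)" by simp
      qed
      have "- C \<le> I" using CI m unfolding I_def by blast
      then have "0 \<le> (- \<phi> t' x') * (I + C)" using m by (intro mult_nonneg_nonneg) auto
      moreover have "(- \<phi> t' x') * (I + C) = - \<phi> t' x' * I - C * \<phi> t' x'" by (simp add: algebra_simps)
      ultimately show ?thesis using E' S2 unfolding G_def by simp
    qed
    have aeU: "AE q in lebesgue. q \<in> U \<longrightarrow> 0 \<le> G q"
      apply (rule eventually_mono[OF phi_eq])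
      subgoal for q by (cases q) (auto intro: Gq)
      done
    have Uge: "\<forall>q\<in>U. 0 \<le> G q"
      by (rule open_AE_ge[OF oU aeU]) (rule continuous_on_subset[OF cG US])
    have pcl: "(t0, x0) \<in> closure U"
      unfolding closure_approachable
    proof (intro allI impI)
      fix e :: real assume e: "e > 0"
      have "continuous_on (closure \<Omega>) (\<lambda>y. (\<lambda>q. \<phi> (fst q) (snd q)) (t0, y))"
        by (rule continuous_on_compose2[OF cPh]) (use t0 t0T in \<open>auto intro!: continuous_intros\<close>)
      then have "continuous_on (closure \<Omega>) (\<lambda>y. \<phi> t0 y)" by simp
      then obtain d where d: "d > 0" "\<forall>y\<in>closure \<Omega>. dist y x0 < d \<longrightarrow> dist (\<phi> t0 y) (\<phi> t0 x0) < - \<phi> t0 x0"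
        using x0 negp unfolding continuous_on_iff by (meson neg_0_less_iff_less)
      obtain y where y: "y \<in> \<Omega>" "dist y x0 < min d e"
        using x0 d e unfolding closure_approachable by (metis min_less_iff_conj)
      have "\<phi> t0 y < 0" using d y sub by (force simp: dist_real_def)
      then have "(t0, y) \<in> U" using y t0pos t0T by (auto simp: U_def B_def Ph_def)
      moreover have "dist (t0, y) (t0, x0) < e" using y by (simp add: dist_Pair_Pair)
      ultimately show "\<exists>q\<in>U. dist q (t0, x0) < e" by blast
    qed
    have "0 \<le> G (t0, x0)"
    proof (rule continuous_ge_on_closure[OF _ pcl])
      have "closure U \<subseteq> S" using US cS by (simp add: closure_minimal)
      then show "continuous_on (closure U) G" using cG continuous_on_subset by blast
    qed (use Uge in auto)
    moreover have "A0 * lap (\<phi>xx t0 x0) \<ge> 0" using A0 xm by simp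
    ultimately show False using dt xm negp unfolding G_def lam_def by (simp add: algebra_simps)
  qed
  show ?thesis
  proof
    show "AE (t, x, r) in lebesgue. (t, x, r) \<in> {0<..<T} \<times> \<Omega> \<times> {r0<..} \<longrightarrow> \<psi> t x r \<ge> 0"
      by (rule AE_I2) (auto intro: psi_pos)
    show "AE (t, x) in lebesgue. (t, x) \<in> {0<..<T} \<times> \<Omega> \<longrightarrow> \<phi> t x \<ge> 0"
      by (rule AE_I2) (auto intro: phi_pos)
  qed
qed


end
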